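(* Let $n\ge3$ be odd. Then the slope of the right-most edge of the Newton polygon of $R_{(n,2)}(x)$ with respect to the prime $3$ is strictly less than $\frac12$ if $3\mid n+1$, and is equal to $\frac12$ if $3\nmid n+1$.
   Context: $\mathrm{He}_k(x)$ denotes the monic probabilists' Hermite polynomial of degree $k$. $\mathrm{He}_{(n,2)}(x)=\mathrm{Wr}[\mathrm{He}_2,\mathrm{He}_{n+1}]/(n-1)$ (the Wronskian Hermite polynomial of the partition $(n,2)$, whose degree sequence is $(2,n+1)$), a monic integer polynomial of degree $n+2$. For $n$ odd, $\mathrm{He}_{(n,2)}(x)=x\,R_{(n,2)}(x)$ with $R_{(n,2)}\in\mathbb{Z}[x]$, $R_{(n,2)}(0)\ne0$. For $G(x)=\sum_{i=0}^N a_ix^i\in\mathbb{Z}[x]$ with $a_0\neq0$ and a prime $p$, the Newton polygon of $G$ with respect to $p$ is the lower convex hull of the points $(i,\nu_p(a_{N-i}))$, $0\le i\le N$, $a_{N-i}\ne0$ ($\nu_p$ the $p$-adic valuation); its right-most edge is the edge ending at $(N,\nu_p(a_0))$. *)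

theory Defs
  imports "HOL-Computational_Algebra.Computational_Algebra"
begin

fun hermite_He :: "nat \<Rightarrow> int poly" where
  "hermite_He 0 = 1"
| "hermite_He (Suc 0) = [:0, 1:]"
| "hermite_He (Suc (Suc k)) = [:0, 1:] * hermite_He (Suc k) - smult (int (Suc k)) (hermite_He k)"

definition wronskian2 :: "int poly \<Rightarrow> int poly \<Rightarrow> int poly" where
  "wronskian2 f g = f * pderiv g - pderiv f * g"

text \<open>He_(n,2) = Wr[He_2, He_(n+1)] / (n-1) (coefficientwise exact division).\<close>
definition He_n2 :: "nat \<Rightarrow> int poly" where
  "He_n2 n = map_poly (\<lambda>c. c div int (n - 1)) (wronskian2 (hermite_He 2) (hermite_He (n + 1)))"

definition R_n2 :: "nat \<Rightarrow> int poly" where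
  "R_n2 n = He_n2 n div [:0, 1:]"

definition newton_points :: "int \<Rightarrow> int poly \<Rightarrow> (real \<times> real) set" where
  "newton_points p G = {(real (degree G - j), real (multiplicity p (coeff G j))) | j.
      j \<le> degree G \<and> coeff G j \<noteq> 0}"

text \<open>Slope of the right-most edge of the Newton polygon (lower convex hull of the points),
  i.e. the edge ending at (N, nu_p(a_0)): it is the largest slope of a segment joining
  another point of the polygon to (N, nu_p(a_0)).\<close>
definition right_edge_slope :: "int \<Rightarrow> int poly \<Rightarrow> real" where
  "right_edge_slope p G =
     Max {(real (multiplicity p (coeff G 0)) - y) / (real (degree G) - x) | x y.
            (x, y) \<in> newton_points p G \<and> x < real (degree G)}"

end

theory Submission
  imports Defs
begin


lemma coeff_X_mult: "coeff ([:0,1:] * (p::int poly)) (Suc j) = coeff p j" "coeff ([:0,1:] * (p::int poly)) 0 = 0"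
  by (auto simp: coeff_pCons)

lemma coeff_X: "coeff [:0,1::int:] j = (if j = 1 then 1 else 0)"
  by (cases j; cases "j - 1") auto

lemma He_parity: "odd (k + j) \<Longrightarrow> coeff (hermite_He k) j = 0"
proof (induction k arbitrary: j rule: hermite_He.induct)
  case 1 then show ?case by (cases j) auto
next
  case 2 then show ?case by (auto simp: coeff_X)
next
  case (3 k)
  show ?case
  proof (cases j)
    case 0 then show ?thesis using 3 by (simp add: coeff_X_mult)
  next
    case (Suc l)
    then show ?thesis using 3 by (simp add: coeff_X_mult)
  qed
qed

lemma He_deg: "k < j \<Longrightarrow> coeff (hermite_He k) j = 0"
proof (induction k arbitrary: j rule: hermite_He.induct)
  case 1 then show ?case by (cases j) auto
next
  case 2 then show ?case by (auto simp: coeff_X)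
next
  case (3 k)
  show ?case
  proof (cases j)
    case 0 then show ?thesis using 3 by simp
  next
    case (Suc l)
    then show ?thesis using 3 by (simp add: coeff_X_mult)
  qed
qed

lemma He_pderiv: "pderiv (hermite_He (Suc k)) = smult (of_nat (Suc k)) (hermite_He k)"
proof (induction k rule: nat_less_induct)
  case (1 k)
  show ?case
  proof (cases k)
    case 0 then show ?thesis by (simp add: pderiv_pCons)
  next
    case (Suc l)
    note IH = 1[rule_format]
    show ?thesis
    proof (cases l)
      case 0 then show ?thesis using Suc by (simp add: pderiv_pCons pderiv_mult pderiv_smult pderiv_diff)
    next
      case (Suc l')
      have "pderiv (hermite_He (Suc k)) = hermite_He k + pCons 0 (pderiv (hermite_He k)) - smult (of_nat k) (pderiv (hermite_He l))"
        using \<open>k = Suc l\<close> by (simp add: pderiv_mult pderiv_smult pderiv_pCons pderiv_diff)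
      also have "\<dots> = hermite_He k + smult (of_nat k) (pCons 0 (hermite_He l) - smult (of_nat l) (hermite_He l'))"
        using IH[of l] IH[of l'] \<open>k = Suc l\<close> \<open>l = Suc l'\<close> by (simp add: algebra_simps smult_diff_right)
      also have "\<dots> = hermite_He k + smult (of_nat k) (hermite_He k)"
        using \<open>k = Suc l\<close> \<open>l = Suc l'\<close> by simp
      also have "\<dots> = smult (of_nat (Suc k)) (hermite_He k)"
        by (simp add: smult_add_left)
      finally show ?thesis .
    qed
  qed
qed



lemma He_closed:
  "2 * t \<le> k \<Longrightarrow> coeff (hermite_He k) (k - 2 * t) * (fact t * fact (k - 2 * t) * 2 ^ t) = (-1) ^ t * fact k"
proof (induction k arbitrary: t rule: hermite_He.induct)
  case 1 then show ?case by simp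
next
  case 2 then have "t = 0" by simp
  then show ?case by simp
next
  case (3 k)
  have rec: "coeff (hermite_He (Suc (Suc k))) j = coeff ([:0,1:] * hermite_He (Suc k)) j - of_nat (Suc k) * coeff (hermite_He k) j" for j
    by simp
  show ?case
  proof (cases t)
    case 0
    have "coeff (hermite_He (Suc k)) (Suc k) = 1"
      using "3.IH"(1)[of 0] by simp
    then show ?thesis using 0 by (simp add: rec coeff_X_mult He_deg)
  next
    case (Suc s)
    show ?thesis
    proof (cases "2 * t = Suc (Suc k)")
      case True
      then have ks: "k = 2 * s" using Suc by simp
      have B: "coeff (hermite_He k) 0 * (fact s * 2 ^ s) = (-1) ^ s * fact k"
        using "3.IH"(2)[of s] ks by simp
      have "coeff (hermite_He (Suc (Suc k))) (Suc (Suc k) - 2 * t) * (fact t * fact (Suc (Suc k) - 2 * t) * 2 ^ t)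
          = - (of_nat (Suc k) * (of_nat (Suc s) * 2)) * (coeff (hermite_He k) 0 * (fact s * 2 ^ s))"
        using True Suc by (simp add: rec coeff_X_mult algebra_simps)
      also have "\<dots> = (-1) ^ t * fact (Suc (Suc k))"
        unfolding B using Suc ks by (simp add: algebra_simps)
      finally show ?thesis .
    next
      case False
      define r where "r = k - 2 * s - 1"
      have kr: "k = r + 2 * s + 1" using False "3.prems" Suc unfolding r_def by simp
      have A: "coeff (hermite_He (Suc k)) r * (fact t * fact r * 2 ^ t) = (-1) ^ t * fact (Suc k)"
        using "3.IH"(1)[of t] kr Suc by simp
      have B: "coeff (hermite_He k) (Suc r) * (fact s * fact (Suc r) * 2 ^ s) = (-1) ^ s * fact k"
        using "3.IH"(2)[of s] kr by (simp add: Suc_diff_le)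
      have j: "Suc (Suc k) - 2 * t = Suc r" using kr Suc by simp
      have "coeff (hermite_He (Suc (Suc k))) (Suc (Suc k) - 2 * t) * (fact t * fact (Suc (Suc k) - 2 * t) * 2 ^ t)
          = of_nat (Suc r) * (coeff (hermite_He (Suc k)) r * (fact t * fact r * 2 ^ t))
            - of_nat (Suc k) * of_nat (2 * t) * (coeff (hermite_He k) (Suc r) * (fact s * fact (Suc r) * 2 ^ s))"
        unfolding j rec coeff_X_mult using Suc by (simp add: algebra_simps)
      also have "\<dots> = (-1) ^ t * fact (Suc (Suc k))"
        unfolding A B using Suc kr by (simp add: algebra_simps)
      finally show ?thesis .
    qed
  qed
qed



lemma smult_as_mult: "smult (c::int) p = [:c:] * p" by simp

lemma wr_abstract:
  fixes A B C D X :: "int poly" and \<kappa> :: int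
  assumes "C = X * B - smult (\<kappa> + 1) A" "D = X * C - smult (\<kappa> + 2) B"
  shows "(X * X - 1) * smult (\<kappa> + 3) C - (2 * X) * D = smult (\<kappa> + 1) (X * X * C + X * B + smult (\<kappa> + 3) A)"
proof -
  have e: "[:\<kappa> + c:] = [:\<kappa>:] + [:c:]" for c by simp
  have n: "[:1::int:] = 1" "[:2::int:] = 2" "[:3::int:] = 3" by (simp_all add: numeral_poly)
  show ?thesis unfolding assms smult_as_mult e n by algebra
qed



lemma He2: "hermite_He 2 = [:0,1:] * [:0,1:] - 1"
  by (simp add: numeral_2_eq_2 one_pCons)

lemma W_eq: "wronskian2 (hermite_He 2) H = ([:0,1:] * [:0,1:] - 1) * pderiv H - (2 * [:0,1:]) * H"
proof -
  have "pderiv (hermite_He 2) = 2 * [:0,1:]"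
    unfolding He2 by (simp add: pderiv_mult pderiv_diff pderiv_pCons numeral_poly)
  then show ?thesis unfolding wronskian2_def He2 by simp
qed

lemma W_He: "wronskian2 (hermite_He 2) (hermite_He (k + 3)) =
   smult (int k + 1) ([:0,1:] * [:0,1:] * hermite_He (k+2) + [:0,1:] * hermite_He (k+1) + smult (int k + 3) (hermite_He k))"
proof -
  have p: "pderiv (hermite_He (k + 3)) = smult (int k + 3) (hermite_He (k+2))"
    using He_pderiv[of "k+2"] by (simp add: numeral_3_eq_3 add.commute)
  have c: "hermite_He (k+2) = [:0,1:] * hermite_He (k+1) - smult (int k + 1) (hermite_He k)"
    by (simp add: numeral_2_eq_2 add.commute)
  have d: "hermite_He (k+3) = [:0,1:] * hermite_He (k+2) - smult (int k + 2) (hermite_He (k+1))"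
    by (simp add: numeral_3_eq_3 numeral_2_eq_2 add.commute)
  show ?thesis unfolding W_eq p by (rule wr_abstract[OF c d])
qed

lemma He_n2_smult: assumes "n \<ge> 2" shows "smult (int (n - 1)) (He_n2 n) = wronskian2 (hermite_He 2) (hermite_He (n + 1))"
proof -
  obtain k where k: "n = k + 2" using assms by (metis add.commute le_Suc_ex)
  define P where "P = [:0,1:] * [:0,1:] * hermite_He (k+2) + [:0,1:] * hermite_He (k+1) + smult (int k + 3) (hermite_He k)"
  have W: "wronskian2 (hermite_He 2) (hermite_He (n + 1)) = smult (int k + 1) P"
  proof -
    have e: "n + 1 = k + 3" using k by simp
    show ?thesis unfolding e P_def by (rule W_He)
  qed
  have "He_n2 n = P"
    unfolding He_n2_def W by (rule poly_eqI) (simp add: coeff_map_poly k add.commute)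
  then show ?thesis using W k by (simp add: add.commute)
qed

lemma W_coeff_Suc: "coeff (([:0,1:] * [:0,1:] - 1) * pderiv H - (2 * [:0,1:]) * H) (Suc j)
   = (int j - 2) * coeff H j - (int j + 2) * coeff (H::int poly) (j + 2)"
  by (cases j) (simp_all add: coeff_pderiv algebra_simps numeral_poly coeff_X_mult)

lemma W_coeff_0: "coeff (([:0,1:] * [:0,1:] - 1) * pderiv H - (2 * [:0,1:]) * H) 0 = - coeff (H::int poly) 1"
  by (simp add: coeff_pderiv numeral_poly coeff_mult_0)



lemma R_coeff:
  assumes "n \<ge> 2" "odd n"
  shows "int (n - 1) * coeff (R_n2 n) j = (int j - 2) * coeff (hermite_He (n+1)) j - (int j + 2) * coeff (hermite_He (n+1)) (j+2)"
proof -
  have S: "int (n - 1) * coeff (He_n2 n) i = coeff (wronskian2 (hermite_He 2) (hermite_He (n + 1))) i" for i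
    using arg_cong[OF He_n2_smult[OF assms(1)], of "\<lambda>p. coeff p i"] by simp
  have n1: "int (n - 1) \<noteq> 0" using assms by simp
  have "coeff (hermite_He (n + 1)) 1 = 0" using assms(2) by (intro He_parity) simp
  then have "int (n - 1) * coeff (He_n2 n) 0 = 0" using S[of 0] unfolding W_eq W_coeff_0 by simp
  then have z: "coeff (He_n2 n) 0 = 0" using n1 by simp
  obtain a q where aq: "He_n2 n = pCons a q" by (rule pCons_cases)
  with z have aq0: "He_n2 n = pCons 0 q" by simp
  have "R_n2 n = q" unfolding R_n2_def aq0
  proof -
    have "pCons 0 q = [:0,1:] * q" by simp
    then show "pCons 0 q div [:0, 1:] = q" by (metis nonzero_mult_div_cancel_left pCons_eq_0_iff zero_neq_one)
  qed
  then have "coeff (R_n2 n) j = coeff (He_n2 n) (Suc j)" using aq0 by simp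
  then show ?thesis using S[of "Suc j"] unfolding W_eq W_coeff_Suc by simp
qed

lemma alg_suc: fixes I A M \<sigma> F :: int assumes "M = A + I - 1"
  shows "(2*I-2)*(2*I+1)*(-\<sigma>*F) - 2*A*(\<sigma>*F) = -\<sigma>*2*F*(2*I^2-2*I+M)"
  unfolding assms by algebra

lemma alg_zero: fixes I M F :: int assumes "M = I - 1"
  shows "(2*I-2)*(2*I+1)*F = 2*F*(2*I^2-2*I+M)"
  unfolding assms by algebra

lemma R_ident:
  assumes m: "m \<ge> 1" and ai: "m + 1 = a + i"
  shows "int (2 * m) * coeff (R_n2 (2 * m + 1)) (2 * i) * (fact a * fact (2 * i + 1) * 2 ^ a)
       = (-1) ^ a * 2 * fact (2 * m + 2) * (2 * int i ^ 2 - 2 * int i + int m)"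
proof -
  define h where "h = coeff (hermite_He (2 * m + 2))"
  have R: "int (2 * m) * coeff (R_n2 (2 * m + 1)) (2 * i) = (2 * int i - 2) * h (2 * i) - (2 * int i + 2) * h (2 * i + 2)"
    using R_coeff[of "2 * m + 1" "2 * i"] m unfolding h_def by (simp add: add.commute)
  have A: "h (2 * i) * (fact a * fact (2 * i) * 2 ^ a) = (-1) ^ a * fact (2 * m + 2)"
  proof -
    have "2 * m + 2 - 2 * a = 2 * i" using ai by simp
    then show ?thesis using He_closed[of a "2 * m + 2"] ai unfolding h_def by simp
  qed
  have fi: "fact (2 * i + 1) = (2 * int i + 1) * (fact (2 * i) :: int)" by (simp add: algebra_simps)
  show ?thesis
  proof (cases a)
    case 0
    then have "h (2 * i + 2) = 0" unfolding h_def using ai by (intro He_deg) simp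
    then have "((2 * int i - 2) * h (2 * i) - (2 * int i + 2) * h (2 * i + 2)) * (fact a * fact (2 * i + 1) * 2 ^ a)
        = (2 * int i - 2) * (2 * int i + 1) * (h (2 * i) * (fact a * fact (2 * i) * 2 ^ a))"
      unfolding fi using 0 by (simp add: algebra_simps)
    also have "\<dots> = (2 * int i - 2) * (2 * int i + 1) * fact (2 * m + 2)" unfolding A using 0 by simp
    also have "\<dots> = 2 * fact (2 * m + 2) * (2 * int i ^ 2 - 2 * int i + int m)"
      by (rule alg_zero) (use ai 0 in simp)
    finally show ?thesis unfolding R using 0 by simp
  next
    case (Suc b)
    have B: "h (2 * i + 2) * (fact b * fact (2 * i + 2) * 2 ^ b) = (-1) ^ b * fact (2 * m + 2)"
    proof -
      have "2 * m + 2 - 2 * b = 2 * i + 2" using ai Suc by simp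
      then show ?thesis using He_closed[of b "2 * m + 2"] ai Suc unfolding h_def by simp
    qed
    have fi2: "fact (2 * i + 2) = (2 * int i + 2) * (fact (2 * i + 1) :: int)"
      by (simp add: algebra_simps)
    have "((2 * int i - 2) * h (2 * i) - (2 * int i + 2) * h (2 * i + 2)) * (fact a * fact (2 * i + 1) * 2 ^ a)
        = (2 * int i - 2) * (2 * int i + 1) * (h (2 * i) * (fact a * fact (2 * i) * 2 ^ a))
          - 2 * int a * (h (2 * i + 2) * (fact b * fact (2 * i + 2) * 2 ^ b))"
      unfolding fi2 fi using Suc by (simp add: algebra_simps)
    also have "\<dots> = (-1) ^ a * 2 * fact (2 * m + 2) * (2 * int i ^ 2 - 2 * int i + int m)"
    proof -
      have s: "(-1::int) ^ a = - ((-1) ^ b)" using Suc by simp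
      show ?thesis unfolding A B s by (rule alg_suc) (use ai in simp)
    qed
    finally show ?thesis unfolding R .
  qed
qed



lemma prime3: "prime (3::int)"
  by simp

lemma v_mult: "(x::int) \<noteq> 0 \<Longrightarrow> y \<noteq> 0 \<Longrightarrow> multiplicity 3 (x * y) = multiplicity 3 x + multiplicity 3 y"
  using prime3 by (simp add: prime_elem_multiplicity_mult_distrib)

lemma v_unit: "multiplicity (3::int) ((-1) ^ a * x) = multiplicity 3 x"
  by (cases "even a") simp_all

lemma v_two: "multiplicity (3::int) (2 * x) = multiplicity 3 x"
proof (cases "x = 0")
  case False
  have "\<not> (3::int) dvd 2" by simp
  then show ?thesis using False by (simp add: v_mult not_dvd_imp_multiplicity_0)
qed simp

lemma v_two_pow: "multiplicity (3::int) (2 ^ a * x) = multiplicity 3 x"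
  by (induction a) (simp_all add: mult.assoc v_two)

lemma vf_rec: "multiplicity (3::int) (fact k) = k div 3 + multiplicity (3::int) (fact (k div 3))"
proof (induction k)
  case 0 then show ?case by simp
next
  case (Suc k)
  have fs: "multiplicity (3::int) (fact (Suc k)) = multiplicity 3 (int (Suc k)) + multiplicity (3::int) (fact k)"
    by (simp add: v_mult del: of_nat_Suc)
  show ?case
  proof (cases "3 dvd Suc k")
    case False
    then have "\<not> (3::int) dvd int (Suc k)" by presburger
    then have "multiplicity (3::int) (int (Suc k)) = 0" by (rule not_dvd_imp_multiplicity_0)
    moreover have "Suc k div 3 = k div 3" using False by presburger
    ultimately show ?thesis using fs Suc by simp
  next
    case True
    then obtain q where q: "Suc k = 3 * Suc q" by (metis dvd_def mult_0_right nat.exhaust nat.simps(3))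
    have d1: "k div 3 = q" "Suc k div 3 = Suc q" using q by presburger+
    have "multiplicity (3::int) (int (Suc k)) = Suc (multiplicity 3 (int (Suc q)))"
    proof -
      have "int (Suc k) = 3 * int (Suc q)" unfolding q by (simp only: of_nat_mult)
      moreover have "multiplicity (3::int) (3 * int (Suc q)) = Suc (multiplicity 3 (int (Suc q)))"
        using prime3 not_prime_unit by (intro multiplicity_times_same) auto
      ultimately show ?thesis by metis
    qed
    moreover have "multiplicity (3::int) (fact (Suc q)) = multiplicity 3 (int (Suc q)) + multiplicity (3::int) (fact q)"
      by (simp add: v_mult del: of_nat_Suc)
    ultimately show ?thesis using fs Suc d1 by simp
  qed
qed

lemma vf_bound: "k \<ge> 1 \<Longrightarrow> 2 * multiplicity (3::int) (fact k) < k"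
proof (induction k rule: less_induct)
  case (less k)
  show ?case
  proof (cases "k div 3 = 0")
    case True then show ?thesis using vf_rec[of k] less.prems by simp
  next
    case False
    then have "2 * multiplicity (3::int) (fact (k div 3)) < k div 3" using less.IH[of "k div 3"] by simp
    then show ?thesis using vf_rec[of k] by linarith
  qed
qed



lemma not_unit3: "\<not> is_unit (3::int)"
  using prime3 not_prime_unit by blast

lemma core:
  assumes m: "m \<ge> 1"
  defines "R \<equiv> R_n2 (2 * m + 1)"
  shows "\<And>j. odd j \<Longrightarrow> coeff R j = 0"
    and "\<And>j. 2 * m + 2 < j \<Longrightarrow> coeff R j = 0"
    and "\<And>i. i \<le> m + 1 \<Longrightarrow> coeff R (2 * i) \<noteq> 0"
    and "\<And>i. 1 \<le> i \<Longrightarrow> i \<le> m + 1 \<Longrightarrow>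
          int (multiplicity 3 (coeff R 0)) - int (multiplicity 3 (coeff R (2 * i)))
           \<le> int i - int (multiplicity (3::int) (int m + 1))"
    and "\<not> (3::int) dvd (int m + 1) \<Longrightarrow> multiplicity 3 (coeff R 0) = multiplicity 3 (coeff R 2) + 1"
proof -
  define h where "h = coeff (hermite_He (2 * m + 2))"
  have Rc: "int (2 * m) * coeff R j = (int j - 2) * h j - (int j + 2) * h (j + 2)" for j
    using R_coeff[of "2 * m + 1" j] m unfolding R_def h_def by (simp add: add.commute)
  have m0: "int (2 * m) \<noteq> 0" using m by simp
  show "coeff R j = 0" if "odd j" for j
  proof -
    have "h j = 0" "h (j + 2) = 0" unfolding h_def using that by (intro He_parity; simp)+
    then show ?thesis using Rc[of j] m0 by simp
  qed
  show "coeff R j = 0" if "2 * m + 2 < j" for j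
  proof -
    have "h j = 0" "h (j + 2) = 0" unfolding h_def using that by (intro He_deg; simp)+
    then show ?thesis using Rc[of j] m0 by simp
  qed
  define v where "v x = multiplicity (3::int) x" for x
  define q where "q i = 2 * int i ^ 2 - 2 * int i + int m" for i
  have qpos: "q i > 0" for i
  proof -
    have h: "int i \<le> int i ^ 2" by (metis of_nat_le_iff of_nat_power le_square power2_eq_square)
    have "int m \<ge> 1" using m by simp
    then show ?thesis unfolding q_def using h by linarith
  qed
  have nz: "coeff R (2 * i) \<noteq> 0" and val: "v (coeff R (2 * i)) + v (int m) + v (fact (m + 1 - i)) + v (fact (2 * i + 1))
      = v (fact (2 * m + 2)) + v (q i)" if "i \<le> m + 1" for i
  proof -
    define a where "a = m + 1 - i"
    have ai: "m + 1 = a + i" using that unfolding a_def by simp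
    have I: "int (2 * m) * coeff R (2 * i) * (fact a * fact (2 * i + 1) * 2 ^ a)
       = (-1) ^ a * 2 * fact (2 * m + 2) * q i"
      using R_ident[OF m ai] unfolding R_def q_def by simp
    have "(-1) ^ a * 2 * fact (2 * m + 2) * q i \<noteq> 0" using qpos[of i] by simp
    then show c0: "coeff R (2 * i) \<noteq> 0" using I by auto
    have L: "int (2 * m) * coeff R (2 * i) * (fact a * fact (2 * i + 1) * 2 ^ a)
       = 2 ^ a * (2 * (int m * (coeff R (2 * i) * (fact a * fact (2 * i + 1)))))" by (simp add: algebra_simps)
    have Rr: "(-1) ^ a * 2 * fact (2 * m + 2) * q i = (-1) ^ a * (2 * (fact (2 * m + 2) * q i))" by simp
    have E1: "v (int (2 * m) * coeff R (2 * i) * (fact a * fact (2 * i + 1) * 2 ^ a))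
        = v (int m) + (v (coeff R (2 * i)) + (v (fact a) + v (fact (2 * i + 1))))"
      unfolding L v_def v_two_pow v_two using c0 m by (simp add: v_mult)
    have E2: "v ((-1) ^ a * 2 * fact (2 * m + 2) * q i) = v (fact (2 * m + 2)) + v (q i)"
      unfolding Rr v_def v_unit v_two using qpos[of i] by (simp add: v_mult)
    have E3: "v (int (2 * m) * coeff R (2 * i) * (fact a * fact (2 * i + 1) * 2 ^ a))
       = v ((-1) ^ a * 2 * fact (2 * m + 2) * q i)" unfolding I ..
    show "v (coeff R (2 * i)) + v (int m) + v (fact (m + 1 - i)) + v (fact (2 * i + 1))
      = v (fact (2 * m + 2)) + v (q i)" using E1 E2 E3 unfolding a_def[symmetric] by linarith
  qed
  show "coeff R (2 * i) \<noteq> 0" if "i \<le> m + 1" for i using nz[OF that] .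
  have F1: "v (fact (m + 1)) = v (int m + 1) + v (fact m)"
    unfolding v_def by (simp add: v_mult add.commute)
  have val0: "v (coeff R 0) + v (fact (m + 1)) = v (fact (2 * m + 2))"
    using val[of 0] unfolding q_def by (simp add: v_def)
  show "int (multiplicity 3 (coeff R 0)) - int (multiplicity 3 (coeff R (2 * i)))
           \<le> int i - int (multiplicity (3::int) (int m + 1))" if i: "1 \<le> i" "i \<le> m + 1" for i
  proof -
    have Lb: "v (fact (2 * i + 1)) \<le> i" using vf_bound[of "2 * i + 1"] unfolding v_def by simp
    have key: "v (int m) + v (fact (m + 1 - i)) + v (int m + 1) \<le> v (q i) + v (fact (m + 1))"
    proof (cases "i = 1")
      case True
      then show ?thesis using F1 unfolding q_def by simp
    next
      case False
      then have i2: "i \<ge> 2" using i by simp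
      have fm: "v (fact m) = v (int m) + v (fact (m - 1))"
      proof -
        have "(fact m :: int) = int m * fact (m - 1)" using m by (intro fact_reduce) simp
        then show ?thesis unfolding v_def using m by (simp add: v_mult)
      qed
      have "v (fact (m + 1 - i)) \<le> v (fact (m - 1))"
        unfolding v_def by (rule dvd_imp_multiplicity_le) (use i2 in \<open>simp_all add: fact_dvd\<close>)
      then show ?thesis using F1 fm by simp
    qed
    show ?thesis using val[of i] val0 Lb key i unfolding v_def by linarith
  qed
  assume nd: "\<not> (3::int) dvd (int m + 1)"
  have "v (int m + 1) = 0" unfolding v_def using nd by (rule not_dvd_imp_multiplicity_0)
  moreover have "v (fact 3) = 1"
  proof -
    have f: "(fact 3 :: int) = 3 * 2" by (simp add: fact_numeral)
    have a: "multiplicity (3::int) (3 * 2) = Suc (multiplicity (3::int) 2)" using not_unit3 by (intro multiplicity_times_same) auto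
    have b: "multiplicity (3::int) 2 = 0" by (rule not_dvd_imp_multiplicity_0) simp
    show ?thesis unfolding v_def f a b by simp
  qed
  ultimately show "multiplicity 3 (coeff R 0) = multiplicity 3 (coeff R 2) + 1"
    using val[of 1] val0 F1 unfolding q_def v_def by (simp add: numeral_3_eq_3)
qed



theorem mainTheorem18:
  fixes n :: nat
  assumes "n \<ge> 3" and "odd n"
  shows "(3 dvd (n + 1) \<longrightarrow> right_edge_slope 3 (R_n2 n) < 1 / 2)
       \<and> (\<not> 3 dvd (n + 1) \<longrightarrow> right_edge_slope 3 (R_n2 n) = 1 / 2)"
proof -
  obtain m where nm: "n = 2 * m + 1" using assms(2) oddE by blast
  have m: "m \<ge> 1" using assms(1) nm by simp
  define R where "R = R_n2 n"
  have R': "R = R_n2 (2 * m + 1)" unfolding R_def nm ..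
  note C = core[OF m, folded R']
  have deg: "degree R = 2 * m + 2"
  proof (rule antisym)
    show "degree R \<le> 2 * m + 2" by (rule degree_le) (use C(2) in blast)
    have "coeff R (2 * (m + 1)) \<noteq> 0" by (rule C(3)) simp
    then show "2 * m + 2 \<le> degree R" using le_degree by fastforce
  qed
  define V where "V j = multiplicity (3::int) (coeff R j)" for j
  define w where "w = multiplicity (3::int) (int m + 1)"
  define g where "g j = (real (V 0) - real (V j)) / real j" for j
  define S where "S = {(real (multiplicity 3 (coeff R 0)) - y) / (real (degree R) - x) | x y.
            (x, y) \<in> newton_points 3 R \<and> x < real (degree R)}"
  have slope: "right_edge_slope 3 R = Max S" unfolding right_edge_slope_def S_def ..
  have S_sub: "S \<subseteq> g ` {j. 1 \<le> j \<and> j \<le> 2 * m + 2 \<and> coeff R j \<noteq> 0}"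
  proof
    fix s assume "s \<in> S"
    then obtain x y where s: "s = (real (multiplicity 3 (coeff R 0)) - y) / (real (degree R) - x)"
      and xy: "(x, y) \<in> newton_points 3 R" and xl: "x < real (degree R)" unfolding S_def by blast
    from xy obtain j where j: "x = real (degree R - j)" "y = real (multiplicity 3 (coeff R j))"
      "j \<le> degree R" "coeff R j \<noteq> 0" unfolding newton_points_def by blast
    have j1: "1 \<le> j" using xl j(1) by (cases j) auto
    have "real (degree R) - x = real j" using j(1,3) by simp
    then have sg: "s = g j" unfolding s g_def V_def j(2) by simp
    have jm: "j \<in> {j. 1 \<le> j \<and> j \<le> 2 * m + 2 \<and> coeff R j \<noteq> 0}" using j(3,4) j1 deg by simp
    show "s \<in> g ` {j. 1 \<le> j \<and> j \<le> 2 * m + 2 \<and> coeff R j \<noteq> 0}" using sg jm by (rule image_eqI)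
  qed
  have fin: "finite S" by (rule finite_subset[OF S_sub]) simp
  have bnd: "real (V 0) - real (V j) \<le> real j / 2 - real w"
    if "1 \<le> j" "j \<le> 2 * m + 2" "coeff R j \<noteq> 0" for j
  proof -
    have "even j" using C(1) that(3) by blast
    then obtain i where i: "j = 2 * i" by blast
    have "int (V 0) - int (V j) \<le> int i - int w"
      unfolding V_def w_def i by (rule C(4)) (use that i in simp_all)
    then show ?thesis using i by simp
  qed
  have g2: "g 2 \<in> S"
  proof -
    have c2: "coeff R 2 \<noteq> 0" using C(3)[of 1] by simp
    have "(real (degree R - 2), real (multiplicity 3 (coeff R 2))) \<in> newton_points 3 R"
      unfolding newton_points_def using c2 deg by (intro CollectI exI[of _ 2]) simp
    moreover have "real (degree R - 2) < real (degree R)" using deg by simp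
    moreover have "g 2 = (real (multiplicity 3 (coeff R 0)) - real (multiplicity 3 (coeff R 2))) / (real (degree R) - real (degree R - 2))"
      unfolding g_def V_def using deg by simp
    ultimately show ?thesis unfolding S_def by blast
  qed
  have le: "s \<le> 1 / 2 - real w / 4 / real (m + 1)" if sS: "s \<in> S" for s
  proof -
    have "s \<in> g ` {j. 1 \<le> j \<and> j \<le> 2 * m + 2 \<and> coeff R j \<noteq> 0}" using S_sub sS by (rule subsetD)
    then obtain j where j: "s = g j" "1 \<le> j" "j \<le> 2 * m + 2" "coeff R j \<noteq> 0" by (auto simp del: One_nat_def)
    have jp: "real j > 0" using j by simp
    have "g j \<le> (real j / 2 - real w) / real j" unfolding g_def
      using bnd[OF j(2-4)] jp by (simp add: divide_right_mono)
    also have "\<dots> = 1 / 2 - real w / real j" using jp by (simp add: field_simps)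
    also have "\<dots> \<le> 1 / 2 - real w / 4 / real (m + 1)"
    proof -
      have "real w / real j \<ge> real w / (2 * real (m + 1))"
        using j jp by (intro divide_left_mono) auto
      moreover have "real w / (2 * real (m + 1)) \<ge> real w / 4 / real (m + 1)"
        by (simp add: field_simps)
      ultimately show ?thesis by linarith
    qed
    finally show ?thesis using j by simp
  qed
  have dv: "3 dvd (n + 1) \<longleftrightarrow> (3::int) dvd (int m + 1)" unfolding nm by presburger
  show ?thesis
  proof (intro conjI impI)
    assume "3 dvd (n + 1)"
    then have d: "(3::int) dvd (int m + 1)" using dv by simp
    have "w \<ge> 1" unfolding w_def
      using multiplicity_geI[of "int m + 1" 3 1] d not_unit3 by simp
    then have "real w / 4 / real (m + 1) > 0" by simp
    then have "\<forall>s\<in>S. s < 1 / 2" using le by fastforce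
    moreover have "S \<noteq> {}" using g2 by blast
    ultimately have "Max S < 1 / 2" using fin Max_less_iff by blast
    then show "right_edge_slope 3 (R_n2 n) < 1 / 2" using slope unfolding R_def by simp
  next
    assume "\<not> 3 dvd (n + 1)"
    then have d: "\<not> (3::int) dvd (int m + 1)" using dv by simp
    have "w = 0" unfolding w_def using d by (rule not_dvd_imp_multiplicity_0)
    have "g 2 = 1 / 2" using C(5)[OF d] unfolding g_def V_def by simp
    have "Max S = 1 / 2"
    proof (rule Max_eqI[OF fin])
      show "y \<le> 1 / 2" if "y \<in> S" for y using le[OF that] \<open>w = 0\<close> by simp
      show "1 / 2 \<in> S" using g2 \<open>g 2 = 1 / 2\<close> by simp
    qed
    then show "right_edge_slope 3 (R_n2 n) = 1 / 2" using slope unfolding R_def by simp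
  qed
qed


end
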